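(* Let $n\ge1$, $r\ge1$ and $1\le k\le n$. Then $\kappa\,\mathcal{S}_{r-1}\Lambda^k(\mathbb{R}^n)\subset\mathcal{S}_r\Lambda^{k-1}(\mathbb{R}^n)$.
   Context: For a multi-index $\alpha\in\mathbb{N}^n$ and $\sigma=\{\sigma(1)<\dots<\sigma(k)\}\subset\{1,\dots,n\}$, the form monomial is $x^\alpha dx_\sigma:=x_1^{\alpha_1}\cdots x_n^{\alpha_n}\,dx_{\sigma(1)}\wedge\cdots\wedge dx_{\sigma(k)}$, of degree $|\alpha|$. $\mathcal{H}_r\Lambda^k(\mathbb{R}^n)$ is the span of form monomials with $|\alpha|=r$, $|\sigma|=k$ ($0$ if $r<0$ or $k\notin\{0,\dots,n\}$), and $\mathcal{P}_r\Lambda^k:=\bigoplus_{j=0}^r\mathcal{H}_j\Lambda^k$. $d$ is the exterior derivative. The Koszul operator is $\kappa(x^\alpha dx_\sigma)=\sum_{i=1}^k(-1)^{i+1}x^\alpha x_{\sigma(i)}\,dx_{\sigma(1)}\wedge\cdots\wedge\widehat{dx_{\sigma(i)}}\wedge\cdots\wedge dx_{\sigma(k)}$, extended linearly. The linear degree is $\mathrm{ldeg}(x^\alpha dx_\sigma):=\#\{i\notin\sigma:\alpha_i=1\}$; $\mathcal{H}_{r,l}\Lambda^k$ is the span of form monomials in $\mathcal{H}_r\Lambda^k$ with linear degree $\ge l$; $\mathcal{J}_r\Lambda^k:=\sum_{l\ge1}\kappa\,\mathcal{H}_{r+l-1,l}\Lambda^{k+1}$; and the serendipity space is $\mathcal{S}_r\Lambda^k:=\mathcal{P}_r\Lambda^k+\mathcal{J}_r\Lambda^k+d\,\mathcal{J}_{r+1}\Lambda^{k-1}$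 (forms of degree $-1$ or $n+1$ are $0$), all on $\mathbb{R}^n$. *)

theory Defs
  imports Complex_Main
begin

text \<open>Coordinates are indexed 0..n-1.
A form monomial x^alpha dx_sigma is encoded by the pair (alpha, sigma) with
alpha :: nat => nat (zero outside {..<n}) and sigma a subset of {..<n}
(its elements listed increasingly). A polynomial form is a finitely supported
real coefficient function on such pairs.\<close>

type_synonym mono = "(nat \<Rightarrow> nat) \<times> nat set"
type_synonym pform = "mono \<Rightarrow> real"

definition valid :: "nat \<Rightarrow> mono \<Rightarrow> bool" where
  "valid n m \<longleftrightarrow> (\<forall>i\<ge>n. fst m i = 0) \<and> snd m \<subseteq> {..<n}"

definition mdeg :: "nat \<Rightarrow> (nat \<Rightarrow> nat) \<Rightarrow> nat" where
  "mdeg n \<alpha> = (\<Sum>i<n. \<alpha> i)"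

definition is_form :: "nat \<Rightarrow> pform \<Rightarrow> bool" where
  "is_form n f \<longleftrightarrow> finite {m. f m \<noteq> 0} \<and> (\<forall>m. f m \<noteq> 0 \<longrightarrow> valid n m)"

definition spanM :: "nat \<Rightarrow> mono set \<Rightarrow> pform set" where
  "spanM n M = {f. is_form n f \<and> (\<forall>m. f m \<noteq> 0 \<longrightarrow> m \<in> M)}"

definition ldeg :: "nat \<Rightarrow> mono \<Rightarrow> nat" where
  "ldeg n m = card {i. i < n \<and> i \<notin> snd m \<and> fst m i = 1}"

text \<open>H_r Lambda^k (zero space if r<0 or k not in 0..n).\<close>
definition Hsp :: "nat \<Rightarrow> int \<Rightarrow> int \<Rightarrow> pform set" where
  "Hsp n r k = spanM n {m. valid n m \<and> int (mdeg n (fst m)) = r \<and> int (card (snd m)) = k}"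

definition Psp :: "nat \<Rightarrow> int \<Rightarrow> int \<Rightarrow> pform set" where
  "Psp n r k = spanM n {m. valid n m \<and> int (mdeg n (fst m)) \<le> r \<and> int (card (snd m)) = k}"

definition Hlsp :: "nat \<Rightarrow> int \<Rightarrow> nat \<Rightarrow> int \<Rightarrow> pform set" where
  "Hlsp n r l k = spanM n {m. valid n m \<and> int (mdeg n (fst m)) = r \<and> int (card (snd m)) = k
                              \<and> ldeg n m \<ge> l}"

text \<open>Koszul operator on a monomial: sum over i of (-1)^(i+1) x^alpha x_{sigma(i)} dx_{sigma - sigma(i)};
for j = sigma(i), i-1 is the number of elements of sigma below j.\<close>
definition kappa_mono :: "mono \<Rightarrow> pform" where
  "kappa_mono m = (\<lambda>(\<beta>, \<tau>). \<Sum>j\<in>snd m.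
      if \<beta> = (fst m)(j := Suc (fst m j)) \<and> \<tau> = snd m - {j}
      then (-1) ^ card {i\<in>snd m. i < j} else 0)"

definition kappa :: "pform \<Rightarrow> pform" where
  "kappa f = (\<lambda>q. \<Sum>p\<in>{p. f p \<noteq> 0}. f p * kappa_mono p q)"

text \<open>Exterior derivative on a monomial:
 d(x^alpha dx_sigma) = sum_j alpha_j x^(alpha - e_j) dx_j /\ dx_sigma, and
 dx_j /\ dx_sigma = (-1)^#{i in sigma, i<j} dx_(sigma + j) for j not in sigma.\<close>
definition d_mono :: "nat \<Rightarrow> mono \<Rightarrow> pform" where
  "d_mono n m = (\<lambda>(\<beta>, \<tau>). \<Sum>j\<in>{..<n} - snd m.
      if 1 \<le> fst m j \<and> \<beta> = (fst m)(j := fst m j - 1) \<and> \<tau> = insert j (snd m)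
      then real (fst m j) * (-1) ^ card {i\<in>snd m. i < j} else 0)"

definition dext :: "nat \<Rightarrow> pform \<Rightarrow> pform" where
  "dext n f = (\<lambda>q. \<Sum>p\<in>{p. f p \<noteq> 0}. f p * d_mono n p q)"

definition Jsp :: "nat \<Rightarrow> int \<Rightarrow> int \<Rightarrow> pform set" where
  "Jsp n r k = {f. \<exists>L g. finite L \<and> (\<forall>l\<in>L. 1 \<le> l \<and> g l \<in> kappa ` Hlsp n (r + int l - 1) l (k + 1))
                       \<and> f = (\<lambda>q. \<Sum>l\<in>L. g l q)}"

definition Ssp :: "nat \<Rightarrow> int \<Rightarrow> int \<Rightarrow> pform set" where
  "Ssp n r k = {(\<lambda>q. p q + j q + e q) | p j e.
      p \<in> Psp n r k \<and> j \<in> Jsp n r k \<and> e \<in> dext n ` Jsp n (r + 1) (k - 1)}"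

end

theory Submission
  imports Defs
begin


definition app :: "(mono \<Rightarrow> pform) \<Rightarrow> pform \<Rightarrow> pform" where
  "app K f = (\<lambda>q. \<Sum>p\<in>{p. f p \<noteq> 0}. f p * K p q)"
definition ind :: "mono \<Rightarrow> pform" where "ind m = (\<lambda>q. if q = m then 1 else 0)"
definition fs :: "pform \<Rightarrow> bool" where "fs f \<longleftrightarrow> finite {p. f p \<noteq> 0}"
definition sg :: "nat set \<Rightarrow> nat \<Rightarrow> real" where "sg s j = (-1) ^ card {i\<in>s. i < j}"

lemma kappa_app: "kappa = app kappa_mono"
  by (simp add: kappa_def app_def fun_eq_iff)
lemma dext_app: "dext n = app (d_mono n)"
  by (simp add: dext_def app_def fun_eq_iff)

lemma app_eq: "fs f \<Longrightarrow> {p. f p \<noteq> 0} \<subseteq> A \<Longrightarrow> finite A \<Longrightarrow> app K f q = (\<Sum>p\<in>A. f p * K p q)"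
  unfolding app_def by (rule sum.mono_neutral_left) auto

lemma app_inf: "\<not> fs f \<Longrightarrow> app K f = (\<lambda>q. 0)"
  unfolding app_def fs_def by auto

lemma app_zero: "app K (\<lambda>q. 0) = (\<lambda>q. 0)"
  unfolding app_def by auto

lemma fs_sum:
  assumes "\<And>x. x \<in> X \<Longrightarrow> fs (g x)"
  shows "fs (\<lambda>q. \<Sum>x\<in>X. c x * g x q)"
proof (cases "finite X")
  case True
  have "{q. (\<Sum>x\<in>X. c x * g x q) \<noteq> 0} \<subseteq> (\<Union>x\<in>X. {q. g x q \<noteq> 0})"
    using sum.not_neutral_contains_not_neutral by fastforce
  moreover have "finite (\<Union>x\<in>X. {q. g x q \<noteq> 0})" using True assms by (auto simp: fs_def)
  ultimately show ?thesis unfolding fs_def using finite_subset by blast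
next
  case False then show ?thesis by (simp add: fs_def)
qed

lemma lin:
  assumes "\<And>x. x \<in> X \<Longrightarrow> fs (g x)"
  shows "app K (\<lambda>q. \<Sum>x\<in>X. c x * g x q) q0 = (\<Sum>x\<in>X. c x * app K (g x) q0)"
proof (cases "finite X")
  case True
  define B where "B = (\<Union>x\<in>X. {q. g x q \<noteq> 0})"
  have fB: "finite B" using True assms by (auto simp: fs_def B_def)
  have sB: "{q. (\<Sum>x\<in>X. c x * g x q) \<noteq> 0} \<subseteq> B"
    using sum.not_neutral_contains_not_neutral unfolding B_def by fastforce
  have "app K (\<lambda>q. \<Sum>x\<in>X. c x * g x q) q0 = (\<Sum>p\<in>B. (\<Sum>x\<in>X. c x * g x p) * K p q0)"
    by (rule app_eq[OF fs_sum[OF assms] sB fB])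
  also have "\<dots> = (\<Sum>x\<in>X. c x * (\<Sum>p\<in>B. g x p * K p q0))"
    by (simp add: sum_distrib_left sum_distrib_right sum.swap[of _ B] mult.assoc)
  also have "\<dots> = (\<Sum>x\<in>X. c x * app K (g x) q0)"
    apply (rule sum.cong, simp)
    apply (subst app_eq[of _ B]) using assms fB by (auto simp: B_def)
  finally show ?thesis .
next
  case False then show ?thesis by (simp add: app_zero)
qed

lemma fs_ind: "fs (ind m)" by (simp add: fs_def ind_def)
lemma app_ind: "app K (ind m) = K m"
proof -
  have "{p. ind m p \<noteq> 0} = {m}" by (auto simp: ind_def)
  then show ?thesis by (simp add: app_def ind_def fun_eq_iff)
qed

lemma app_comb: "app K (\<lambda>q. \<Sum>x\<in>X. c x * ind (t x) q) q0 = (\<Sum>x\<in>X. c x * K (t x) q0)"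
  by (subst lin) (auto simp: fs_ind app_ind)

lemma kappa_mono_eq: "kappa_mono (a, s) = (\<lambda>q. \<Sum>j\<in>s. sg s j * ind (a(j := Suc (a j)), s - {j}) q)"
proof (rule ext)
  fix q :: mono
  obtain b t where q: "q = (b, t)" by (cases q)
  show "kappa_mono (a, s) q = (\<Sum>j\<in>s. sg s j * ind (a(j := Suc (a j)), s - {j}) q)"
    unfolding q kappa_mono_def ind_def sg_def fst_conv snd_conv prod.case by (rule sum.cong) auto
qed
lemma d_mono_eq: "d_mono n (a, s) = (\<lambda>q. \<Sum>i\<in>{..<n} - s. real (a i) * sg s i * ind (a(i := a i - 1), insert i s) q)"
proof (rule ext)
  fix q :: mono
  obtain b t where q: "q = (b, t)" by (cases q)
  show "d_mono n (a, s) q = (\<Sum>i\<in>{..<n} - s. real (a i) * sg s i * ind (a(i := a i - 1), insert i s) q)"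
    unfolding q d_mono_def ind_def sg_def fst_conv snd_conv prod.case by (rule sum.cong) auto
qed
lemma fs_km: "fs (kappa_mono m)"
proof -
  obtain a s where m: "m = (a, s)" by (cases m)
  show ?thesis unfolding m kappa_mono_eq by (rule fs_sum) (rule fs_ind)
qed
lemma fs_dm: "fs (d_mono n m)"
proof -
  obtain a s where m: "m = (a, s)" by (cases m)
  show ?thesis unfolding m d_mono_eq
    using fs_sum[where c="\<lambda>i. real (a i) * sg s i" and g="\<lambda>i. ind (a(i := a i - 1), insert i s)" and X="{..<n} - s"]
    by (simp add: fs_ind mult.assoc)
qed

lemma fs_app: "(\<And>p. fs (K p)) \<Longrightarrow> fs (app K f)"
proof (cases "fs f")
  case True
  assume "\<And>p. fs (K p)"
  then show ?thesis unfolding app_def by (rule fs_sum)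
next
  case False then show ?thesis by (simp add: app_inf fs_def)
qed

lemma supp_app: "app K f q \<noteq> 0 \<Longrightarrow> \<exists>p. f p \<noteq> 0 \<and> K p q \<noteq> 0"
proof -
  assume "app K f q \<noteq> 0"
  then have "(\<Sum>p\<in>{p. f p \<noteq> 0}. f p * K p q) \<noteq> 0" by (simp add: app_def)
  then obtain p where "p \<in> {p. f p \<noteq> 0}" "f p * K p q \<noteq> 0"
    using sum.not_neutral_contains_not_neutral by blast
  then have "f p \<noteq> 0 \<and> K p q \<noteq> 0" by simp
  then show ?thesis by (rule exI)
qed

lemma app_add: "fs A \<Longrightarrow> fs B \<Longrightarrow> app K (\<lambda>q. A q + B q) q0 = app K A q0 + app K B q0"
proof -
  assume a: "fs A" "fs B"
  define S where "S = {p. A p \<noteq> 0} \<union> {p. B p \<noteq> 0}"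
  have fS: "finite S" using a by (simp add: S_def fs_def)
  have fAB: "fs (\<lambda>q. A q + B q)" using a unfolding fs_def
    by (rule_tac finite_subset[of _ "{p. A p \<noteq> 0} \<union> {p. B p \<noteq> 0}"]) auto
  show ?thesis
    apply (subst app_eq[OF fAB _ fS], force simp: S_def)
    apply (subst app_eq[OF a(1) _ fS], force simp: S_def)
    apply (subst app_eq[OF a(2) _ fS], force simp: S_def)
    by (simp add: sum.distrib distrib_right)
qed

lemma app_scale: "fs A \<Longrightarrow> app K (\<lambda>q. c * A q) q0 = c * app K A q0"
proof -
  assume a: "fs A"
  have f2: "fs (\<lambda>q. c * A q)" using a unfolding fs_def
    by (rule_tac finite_subset[of _ "{p. A p \<noteq> 0}"]) auto
  show ?thesis
    apply (subst app_eq[OF f2 _ , of "{p. A p \<noteq> 0}"]) using a apply (auto simp: fs_def)[2]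
    apply (subst app_eq[OF a _ , of "{p. A p \<noteq> 0}"]) using a apply (auto simp: fs_def)[2]
    by (simp add: sum_distrib_left mult.assoc)
qed



lemma sg_remove:
  assumes "finite s" "j \<in> s" "i \<noteq> j"
  shows "sg (s - {j}) i = (if j < i then -1 else 1) * sg s i"
proof -
  have e: "{x\<in>s-{j}. x < i} = {x\<in>s. x < i} - {j}" by blast
  show ?thesis
  proof (cases "j < i")
    case True
    then have jin: "j \<in> {x\<in>s. x < i}" using assms by blast
    have fin: "finite {x\<in>s. x < i}" using assms(1) by simp
    have "card {x\<in>s. x < i} = Suc (card ({x\<in>s. x < i} - {j}))"
      using card_Suc_Diff1[OF fin jin] by simp
    then show ?thesis using True unfolding sg_def e by simp
  next
    case False then show ?thesis unfolding sg_def e by simp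
  qed
qed

lemma sg_insert:
  assumes "finite s" "i \<notin> s" "j \<noteq> i"
  shows "sg (insert i s) j = (if i < j then -1 else 1) * sg s j"
proof (cases "i < j")
  case True
  then have e: "{x\<in>insert i s. x < j} = insert i {x\<in>s. x < j}" by blast
  have "i \<notin> {x\<in>s. x < j}" using assms by blast
  moreover have "finite {x\<in>s. x < j}" using assms(1) by simp
  ultimately have "card {x\<in>insert i s. x < j} = Suc (card {x\<in>s. x < j})" unfolding e by simp
  then show ?thesis using True unfolding sg_def by simp
next
  case False
  then have e: "{x\<in>insert i s. x < j} = {x\<in>s. x < j}" by auto
  show ?thesis using False unfolding sg_def e by simp
qed

lemma sg_self_remove: "sg (s - {j}) j = sg s j"
proof -
  have "{x\<in>s-{j}. x < j} = {x\<in>s. x < j}" by blast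
  then show ?thesis by (simp add: sg_def)
qed

lemma sg_self_insert: "sg (insert j s) j = sg s j"
proof -
  have "{x\<in>insert j s. x < j} = {x\<in>s. x < j}" by blast
  then show ?thesis by (simp add: sg_def)
qed

lemma sg_sq: "sg s j * sg s j = 1"
  unfolding sg_def by (simp flip: power_add)

lemma kk_mono: "kappa (kappa_mono m) q = 0"
proof -
  obtain a s where m: "m = (a, s)" by (cases m)
  show ?thesis
  proof (cases "finite s")
    case False
    then show ?thesis by (simp add: m kappa_mono_eq kappa_app app_zero)
  next
    case True
    define T where "T j i = (a(j := Suc (a j), i := Suc (a i)), s - {j} - {i})" for j i
    define F where "F = (\<lambda>(j,i). sg s j * sg (s - {j}) i * ind (T j i) q)"
    define P where "P = Sigma s (\<lambda>j. s - {j})"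
    have "kappa (kappa_mono m) q = (\<Sum>j\<in>s. sg s j * (\<Sum>i\<in>s - {j}. sg (s-{j}) i * ind (T j i) q))"
      unfolding m kappa_app kappa_mono_eq app_comb
      by (rule sum.cong) (auto simp: kappa_mono_eq T_def intro!: sum.cong)
    also have "\<dots> = (\<Sum>x\<in>P. F x)"
    proof -
      have "(\<Sum>j\<in>s. sg s j * (\<Sum>i\<in>s - {j}. sg (s-{j}) i * ind (T j i) q))
          = (\<Sum>j\<in>s. (\<Sum>i\<in>s - {j}. F (j, i)))"
        by (simp add: F_def sum_distrib_left mult.assoc)
      also have "\<dots> = (\<Sum>x\<in>P. F x)" unfolding P_def using True
        by (subst sum.Sigma) auto
      finally show ?thesis .
    qed
    finally have e1: "kappa (kappa_mono m) q = (\<Sum>x\<in>P. F x)" .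
    have "(\<Sum>x\<in>P. F x) = (\<Sum>x\<in>P. F (prod.swap x))"
    proof -
      have "prod.swap ` P = P" by (auto simp: P_def image_iff)
      then have "(\<Sum>x\<in>P. F x) = (\<Sum>x\<in>prod.swap ` P. F x)" by simp
      also have "\<dots> = (\<Sum>x\<in>P. F (prod.swap x))" by (subst sum.reindex) auto
      finally show ?thesis .
    qed
    also have "\<dots> = (\<Sum>x\<in>P. - F x)"
    proof (rule sum.cong)
      fix x assume "x \<in> P"
      then obtain j i where x: "x = (j,i)" "j \<in> s" "i \<in> s" "i \<noteq> j" by (auto simp: P_def)
      have "T i j = T j i" unfolding T_def using x by (auto simp: fun_upd_twist)
      moreover have "sg s i * sg (s - {i}) j = - (sg s j * sg (s - {j}) i)"
      proof -
        have a1: "sg (s-{i}) j = (if i<j then -1 else 1) * sg s j" using x True by (intro sg_remove) auto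
        have a2: "sg (s-{j}) i = (if j<i then -1 else 1) * sg s i" using x True by (intro sg_remove) auto
        show ?thesis unfolding a1 a2 using x(4) by (cases "i < j") auto
      qed
      ultimately show "F (prod.swap x) = - F x" unfolding F_def x by simp
    qed simp
    finally have "(\<Sum>x\<in>P. F x) = 0" by (simp add: sum_negf)
    with e1 show ?thesis by simp
  qed
qed

lemma kk: "kappa (kappa h) = (\<lambda>q. 0)"
proof (cases "fs h")
  case False then show ?thesis by (simp add: kappa_app app_inf app_zero)
next
  case True
  show ?thesis
  proof
    fix q
    have "kappa (kappa h) q = app kappa_mono (\<lambda>q. \<Sum>p\<in>{p. h p \<noteq> 0}. h p * kappa_mono p q) q"
      by (simp add: kappa_app app_def)
    also have "\<dots> = (\<Sum>p\<in>{p. h p \<noteq> 0}. h p * kappa (kappa_mono p) q)"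
      by (subst lin) (auto simp: fs_km kappa_app)
    also have "\<dots> = 0" by (simp add: kk_mono)
    finally show "kappa (kappa h) q = 0" .
  qed
qed



lemma cartan_mono:
  assumes v: "valid n (a, s)"
  shows "dext n (kappa_mono (a, s)) q + kappa (d_mono n (a, s)) q
         = (real (mdeg n a) + real (card s)) * ind (a, s) q"
proof -
  have sn: "s \<subseteq> {..<n}" using v by (simp add: valid_def)
  have fin: "finite s" using sn finite_subset by blast
  define N where "N = {..<n} - s"
  have finN: "finite N" by (simp add: N_def)
  have sN: "s \<inter> N = {}" by (auto simp: N_def)
  define X where "X j i = (a(j := Suc (a j), i := a i - 1), insert i (s - {j}))" for j i
  define Y where "Y i j = (a(i := a i - 1, j := Suc (a j)), insert i s - {j})" for i j
  define O1 where "O1 = (\<Sum>j\<in>s. \<Sum>i\<in>N. sg s j * (real (a i) * sg (s - {j}) i * ind (X j i) q))"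
  define O2 where "O2 = (\<Sum>i\<in>N. \<Sum>j\<in>s. real (a i) * sg s i * (sg (insert i s) j * ind (Y i j) q))"
  have D1: "dext n (kappa_mono (a, s)) q = (\<Sum>j\<in>s. real (Suc (a j)) * ind (a, s) q) + O1"
  proof -
    have "dext n (kappa_mono (a, s)) q = (\<Sum>j\<in>s. sg s j * d_mono n (a(j := Suc (a j)), s - {j}) q)"
      unfolding dext_app kappa_mono_eq app_comb ..
    also have "\<dots> = (\<Sum>j\<in>s. real (Suc (a j)) * ind (a, s) q
                   + (\<Sum>i\<in>N. sg s j * (real (a i) * sg (s - {j}) i * ind (X j i) q)))"
    proof (rule sum.cong[OF refl])
      fix j assume j: "j \<in> s"
      have jn: "j < n" using j sn by blast
      have ins: "{..<n} - (s - {j}) = insert j N" using jn j by (auto simp: N_def)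
      have jN: "j \<notin> N" using j by (simp add: N_def)
      have e1: "(a(j := Suc (a j)))(j := (a(j := Suc (a j))) j - 1) = a" by simp
      have e2: "insert j (s - {j}) = s" using j by blast
      have rest: "(\<Sum>i\<in>N. real ((a(j := Suc (a j))) i) * sg (s - {j}) i *
                    ind ((a(j := Suc (a j)))(i := (a(j := Suc (a j))) i - 1), insert i (s - {j})) q)
              = (\<Sum>i\<in>N. real (a i) * sg (s - {j}) i * ind (X j i) q)"
      proof (rule sum.cong[OF refl])
        fix i assume "i \<in> N"
        then have "i \<noteq> j" using jN by blast
        then show "real ((a(j := Suc (a j))) i) * sg (s - {j}) i *
                    ind ((a(j := Suc (a j)))(i := (a(j := Suc (a j))) i - 1), insert i (s - {j})) q
              = real (a i) * sg (s - {j}) i * ind (X j i) q" by (simp add: X_def)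
      qed
      have "sg s j * d_mono n (a(j := Suc (a j)), s - {j}) q
          = sg s j * (real (Suc (a j)) * sg (s - {j}) j * ind (a, s) q
             + (\<Sum>i\<in>N. real (a i) * sg (s - {j}) i * ind (X j i) q))"
        unfolding d_mono_eq ins sum.insert[OF finN jN] e1 e2 rest by simp
      also have "\<dots> = real (Suc (a j)) * ind (a, s) q
             + (\<Sum>i\<in>N. sg s j * (real (a i) * sg (s - {j}) i * ind (X j i) q))"
      proof -
        have sq: "sg s j * (sg s j * z) = z" for z using sg_sq[of s j] by (simp add: mult.assoc[symmetric])
        show ?thesis unfolding sg_self_remove distrib_left sum_distrib_left
          by (simp add: sq mult.assoc)
      qed
      finally show "sg s j * d_mono n (a(j := Suc (a j)), s - {j}) q = real (Suc (a j)) * ind (a, s) q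
             + (\<Sum>i\<in>N. sg s j * (real (a i) * sg (s - {j}) i * ind (X j i) q))" .
    qed
    also have "\<dots> = (\<Sum>j\<in>s. real (Suc (a j)) * ind (a, s) q) + O1"
      unfolding O1_def by (rule sum.distrib)
    finally show ?thesis .
  qed
  have D2: "kappa (d_mono n (a, s)) q = (\<Sum>i\<in>N. real (a i) * ind (a, s) q) + O2"
  proof -
    have "kappa (d_mono n (a, s)) q = (\<Sum>i\<in>N. real (a i) * sg s i * kappa_mono (a(i := a i - 1), insert i s) q)"
      unfolding kappa_app d_mono_eq app_comb N_def ..
    also have "\<dots> = (\<Sum>i\<in>N. real (a i) * ind (a, s) q
                   + (\<Sum>j\<in>s. real (a i) * sg s i * (sg (insert i s) j * ind (Y i j) q)))"
    proof (rule sum.cong[OF refl])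
      fix i assume i: "i \<in> N"
      have is': "i \<notin> s" using i by (simp add: N_def)
      have e2: "insert i s - {i} = s" using is' by blast
      have rest: "(\<Sum>j\<in>s. sg (insert i s) j * ind ((a(i := a i - 1))(j := Suc ((a(i := a i - 1)) j)), insert i s - {j}) q)
            = (\<Sum>j\<in>s. sg (insert i s) j * ind (Y i j) q)"
      proof (rule sum.cong[OF refl])
        fix j assume "j \<in> s"
        then have "i \<noteq> j" using is' by blast
        then show "sg (insert i s) j * ind ((a(i := a i - 1))(j := Suc ((a(i := a i - 1)) j)), insert i s - {j}) q
            = sg (insert i s) j * ind (Y i j) q" by (simp add: Y_def)
      qed
      have diag: "real (a i) * sg s i * (sg s i * ind ((a(i := a i - 1))(i := Suc ((a(i := a i - 1)) i)), s) q)
            = real (a i) * ind (a, s) q"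
      proof (cases "a i = 0")
        case True then show ?thesis by simp
      next
        case False
        then have "(a(i := a i - 1))(i := Suc ((a(i := a i - 1)) i)) = a" by auto
        then show ?thesis using sg_sq[of s i] by (simp add: algebra_simps)
      qed
      show "real (a i) * sg s i * kappa_mono (a(i := a i - 1), insert i s) q
          = real (a i) * ind (a, s) q + (\<Sum>j\<in>s. real (a i) * sg s i * (sg (insert i s) j * ind (Y i j) q))"
        unfolding kappa_mono_eq sum.insert[OF fin is'] e2 rest sg_self_insert distrib_left diag
        by (simp add: sum_distrib_left)
    qed
    also have "\<dots> = (\<Sum>i\<in>N. real (a i) * ind (a, s) q) + O2"
      unfolding O2_def by (rule sum.distrib)
    finally show ?thesis .
  qed
  have O: "O1 + O2 = 0"
  proof -
    have "O2 = (\<Sum>j\<in>s. \<Sum>i\<in>N. real (a i) * sg s i * (sg (insert i s) j * ind (Y i j) q))"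
      unfolding O2_def by (rule sum.swap)
    then have "O1 + O2 = (\<Sum>j\<in>s. \<Sum>i\<in>N. sg s j * (real (a i) * sg (s - {j}) i * ind (X j i) q)
                 + real (a i) * sg s i * (sg (insert i s) j * ind (Y i j) q))"
      unfolding O1_def by (simp add: sum.distrib)
    also have "\<dots> = (\<Sum>j\<in>s. \<Sum>i\<in>N. 0)"
    proof (intro sum.cong refl)
      fix j i assume j: "j \<in> s" and i: "i \<in> N"
      have is': "i \<notin> s" using i by (simp add: N_def)
      have ij: "i \<noteq> j" using j is' by blast
      have XY: "X j i = Y i j" unfolding X_def Y_def using ij by (auto simp: fun_upd_twist)
      have a1: "sg (s - {j}) i = (if j < i then -1 else 1) * sg s i" using fin j ij by (rule sg_remove)
      have a2: "sg (insert i s) j = (if i < j then -1 else 1) * sg s j" using fin is' ij[symmetric] by (rule sg_insert)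
      have "sg s j * sg (s - {j}) i + sg s i * sg (insert i s) j = 0"
        unfolding a1 a2 using ij by (cases "i < j") (auto simp: algebra_simps)
      then have "(sg s j * sg (s - {j}) i + sg s i * sg (insert i s) j) * (real (a i) * ind (X j i) q) = 0" by simp
      then show "sg s j * (real (a i) * sg (s - {j}) i * ind (X j i) q)
                 + real (a i) * sg s i * (sg (insert i s) j * ind (Y i j) q) = 0"
        unfolding XY by (simp add: algebra_simps)
    qed
    finally show ?thesis by simp
  qed
  have S: "(\<Sum>j\<in>s. real (Suc (a j))) + (\<Sum>i\<in>N. real (a i)) = real (mdeg n a) + real (card s)"
  proof -
    have "mdeg n a = sum a N + sum a s" unfolding mdeg_def N_def
      by (rule sum.subset_diff[OF sn]) simp
    then show ?thesis by (simp add: sum.distrib)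
  qed
  show ?thesis
  proof -
    have "dext n (kappa_mono (a, s)) q + kappa (d_mono n (a, s)) q
        = ((\<Sum>j\<in>s. real (Suc (a j))) + (\<Sum>i\<in>N. real (a i))) * ind (a, s) q + (O1 + O2)"
      unfolding D1 D2 by (simp add: sum_distrib_right distrib_right)
    then show ?thesis unfolding O S by simp
  qed
qed



lemma fs_sum1: "(\<And>x. x \<in> X \<Longrightarrow> fs (g x)) \<Longrightarrow> fs (\<lambda>q. \<Sum>x\<in>X. g x q)"
  using fs_sum[of X g "\<lambda>_. 1"] by simp

lemma lin1: "(\<And>x. x \<in> X \<Longrightarrow> fs (g x)) \<Longrightarrow> app K (\<lambda>q. \<Sum>x\<in>X. g x q) q0 = (\<Sum>x\<in>X. app K (g x) q0)"
  using lin[of X g K "\<lambda>_. 1"] by simp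

lemma fs_add: "fs A \<Longrightarrow> fs B \<Longrightarrow> fs (\<lambda>q. A q + B q)"
  unfolding fs_def by (rule finite_subset[of _ "{p. A p \<noteq> 0} \<union> {p. B p \<noteq> 0}"]) auto

lemma fs_form: "is_form n f \<Longrightarrow> fs f" by (simp add: is_form_def fs_def)

lemma cartan_form:
  assumes f: "is_form n h" and hom: "\<And>m. h m \<noteq> 0 \<Longrightarrow> mdeg n (fst m) + card (snd m) = c"
  shows "dext n (kappa h) q + kappa (dext n h) q = real c * h q"
proof -
  define S where "S = {p. h p \<noteq> 0}"
  have fS: "finite S" using f by (simp add: S_def is_form_def)
  have kh: "kappa h = (\<lambda>q. \<Sum>p\<in>S. h p * kappa_mono p q)" by (simp add: kappa_app app_def S_def)
  have dh: "dext n h = (\<lambda>q. \<Sum>p\<in>S. h p * d_mono n p q)" by (simp add: dext_app app_def S_def)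
  have "dext n (kappa h) q + kappa (dext n h) q
      = (\<Sum>p\<in>S. h p * dext n (kappa_mono p) q) + (\<Sum>p\<in>S. h p * kappa (d_mono n p) q)"
  proof -
    have 1: "dext n (kappa h) q = (\<Sum>p\<in>S. h p * dext n (kappa_mono p) q)"
      unfolding kh dext_app by (rule lin, rule fs_km)
    have 2: "kappa (dext n h) q = (\<Sum>p\<in>S. h p * kappa (d_mono n p) q)"
      unfolding dh kappa_app by (rule lin, rule fs_dm)
    show ?thesis unfolding 1 2 ..
  qed
  also have "\<dots> = (\<Sum>p\<in>S. h p * (dext n (kappa_mono p) q + kappa (d_mono n p) q))"
    by (simp add: sum.distrib distrib_left)
  also have "\<dots> = (\<Sum>p\<in>S. real c * (h p * ind p q))"
  proof (rule sum.cong[OF refl])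
    fix p assume p: "p \<in> S"
    obtain a s where ps: "p = (a, s)" by (cases p)
    have v: "valid n (a, s)" using f p ps by (simp add: is_form_def S_def)
    have c: "mdeg n a + card s = c" using hom[of p] p ps by (simp add: S_def)
    show "h p * (dext n (kappa_mono p) q + kappa (d_mono n p) q) = real c * (h p * ind p q)"
      unfolding ps cartan_mono[OF v] using c[symmetric] by simp
  qed
  also have "\<dots> = real c * h q"
  proof -
    have "(\<Sum>p\<in>S. h p * ind p q) = h q"
    proof -
      have "(\<Sum>p\<in>S. h p * ind p q) = (\<Sum>p\<in>S. if p = q then h p else 0)"
        by (rule sum.cong) (auto simp: ind_def)
      also have "\<dots> = (if q \<in> S then h q else 0)" using fS by (rule sum.delta)
      also have "\<dots> = h q" by (auto simp: S_def)
      finally show ?thesis .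
    qed
    then show ?thesis by (simp add: sum_distrib_left[symmetric])
  qed
  finally show ?thesis .
qed

lemma kdk:
  assumes f: "is_form n h" and hom: "\<And>m. h m \<noteq> 0 \<Longrightarrow> mdeg n (fst m) + card (snd m) = c"
  shows "kappa (dext n (kappa h)) = (\<lambda>q. real c * kappa h q)"
proof
  fix q0
  have fh: "fs h" using f by (rule fs_form)
  have f1: "fs (dext n (kappa h))" unfolding dext_app by (rule fs_app, rule fs_dm)
  have f2: "fs (kappa (dext n h))" unfolding kappa_app by (rule fs_app, rule fs_km)
  have e: "(\<lambda>q. dext n (kappa h) q + kappa (dext n h) q) = (\<lambda>q. real c * h q)"
    using cartan_form[OF f hom] by blast
  have "kappa (\<lambda>q. dext n (kappa h) q + kappa (dext n h) q) q0
      = kappa (dext n (kappa h)) q0 + kappa (kappa (dext n h)) q0"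
    unfolding kappa_app using f1 f2 unfolding kappa_app by (rule app_add)
  also have "\<dots> = kappa (dext n (kappa h)) q0" by (simp add: kk)
  finally have "kappa (dext n (kappa h)) q0 = kappa (\<lambda>q. real c * h q) q0" using e by simp
  also have "\<dots> = real c * kappa h q0" unfolding kappa_app by (rule app_scale[OF fh])
  finally show "kappa (dext n (kappa h)) q0 = real c * kappa h q0" .
qed

lemma kmono_supp:
  assumes "kappa_mono (a, s) q \<noteq> 0"
  shows "\<exists>j\<in>s. q = (a(j := Suc (a j)), s - {j})"
proof -
  have "(\<Sum>j\<in>s. sg s j * ind (a(j := Suc (a j)), s - {j}) q) \<noteq> 0"
    using assms by (simp add: kappa_mono_eq)
  then obtain j where "j \<in> s" "sg s j * ind (a(j := Suc (a j)), s - {j}) q \<noteq> 0"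
    using sum.not_neutral_contains_not_neutral by blast
  then show ?thesis by (auto simp: ind_def split: if_splits)
qed

lemma kmono_props:
  assumes v: "valid n (a, s)" and j: "j \<in> s"
  shows "valid n (a(j := Suc (a j)), s - {j})" "mdeg n (a(j := Suc (a j))) = Suc (mdeg n a)"
        "int (card (s - {j})) = int (card s) - 1"
proof -
  have sn: "s \<subseteq> {..<n}" and az: "\<forall>i\<ge>n. a i = 0" using v by (auto simp: valid_def)
  have jn: "j < n" using sn j by blast
  show "valid n (a(j := Suc (a j)), s - {j})" using sn az jn by (auto simp: valid_def)
  have fs: "finite s" using sn finite_subset by blast
  have "card (s - {j}) = card s - 1" using j fs by simp
  moreover have "card s \<ge> 1" using j fs by (metis One_nat_def Suc_leI card_gt_0_iff empty_iff)
  ultimately show "int (card (s - {j})) = int (card s) - 1" by simp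
  have jin: "j \<in> {..<n}" using jn by simp
  have "mdeg n (a(j := Suc (a j))) = Suc (a j) + (\<Sum>i\<in>{..<n} - {j}. (a(j := Suc (a j))) i)"
    unfolding mdeg_def by (subst sum.remove[OF _ jin]) auto
  also have "(\<Sum>i\<in>{..<n} - {j}. (a(j := Suc (a j))) i) = (\<Sum>i\<in>{..<n} - {j}. a i)"
    by (rule sum.cong) auto
  also have "mdeg n a = a j + (\<Sum>i\<in>{..<n} - {j}. a i)"
    unfolding mdeg_def by (subst sum.remove[OF _ jin]) auto
  ultimately show "mdeg n (a(j := Suc (a j))) = Suc (mdeg n a)" by linarith
qed

lemma spanM_scale: "f \<in> spanM n M \<Longrightarrow> (\<lambda>q. c * f q) \<in> spanM n M"
  unfolding spanM_def is_form_def
  by (auto intro: finite_subset[of "{m. c * f m \<noteq> 0}" "{m. f m \<noteq> 0}"])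



lemma kappa_P:
  assumes p: "p \<in> Psp n (r - 1) k"
  shows "kappa p \<in> Psp n r (k - 1)"
proof -
  have key: "valid n m \<and> int (mdeg n (fst m)) \<le> r \<and> int (card (snd m)) = k - 1"
    if m: "kappa p m \<noteq> 0" for m
  proof -
    have "app kappa_mono p m \<noteq> 0" using m by (simp add: kappa_app)
    from supp_app[OF this] obtain p0 where p0: "p p0 \<noteq> 0" "kappa_mono p0 m \<noteq> 0" by blast
    obtain a s where ps: "p0 = (a, s)" by (cases p0)
    have pp: "valid n (a, s)" "int (mdeg n a) \<le> r - 1" "int (card s) = k"
      using p p0(1) ps by (auto simp: Psp_def spanM_def)
    obtain j where j: "j \<in> s" "m = (a(j := Suc (a j)), s - {j})"
      using kmono_supp[of a s m] p0(2) ps by blast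
    show ?thesis using kmono_props[OF pp(1) j(1)] pp j(2) by simp
  qed
  have "fs (kappa p)" unfolding kappa_app by (rule fs_app, rule fs_km)
  then have "is_form n (kappa p)"
    unfolding is_form_def fs_def using key by blast
  then show ?thesis unfolding Psp_def spanM_def using key by blast
qed

lemma fs_J: "f \<in> Jsp n r k \<Longrightarrow> fs f"
proof -
  assume "f \<in> Jsp n r k"
  then obtain L g where L: "\<forall>l\<in>L. 1 \<le> l \<and> g l \<in> kappa ` Hlsp n (r + int l - 1) l (k + 1)"
    and f: "f = (\<lambda>q. \<Sum>l\<in>L. g l q)" unfolding Jsp_def by blast
  have "fs (g l)" if l: "l \<in> L" for l
  proof -
    obtain x where "g l = kappa x" using L l by blast
    then show ?thesis unfolding kappa_app using fs_app[OF fs_km] by simp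
  qed
  then show ?thesis unfolding f by (rule fs_sum1)
qed

lemma kappa_J: "f \<in> Jsp n r k \<Longrightarrow> kappa f = (\<lambda>q. 0)"
proof -
  assume "f \<in> Jsp n r k"
  then obtain L g where L: "finite L" "\<forall>l\<in>L. 1 \<le> l \<and> g l \<in> kappa ` Hlsp n (r + int l - 1) l (k + 1)"
    and f: "f = (\<lambda>q. \<Sum>l\<in>L. g l q)" unfolding Jsp_def by blast
  have g: "\<exists>h. g l = kappa h" if "l \<in> L" for l using L that by blast
  have fg: "fs (g l)" if l: "l \<in> L" for l
  proof -
    obtain x where "g l = kappa x" using g l by blast
    then show ?thesis unfolding kappa_app using fs_app[OF fs_km] by simp
  qed
  have kg: "kappa (g l) q = 0" if l: "l \<in> L" for l q
  proof -
    obtain x where "g l = kappa x" using g l by blast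
    then show ?thesis using kk[of x] by simp
  qed
  show ?thesis
  proof
    fix q
    have "kappa f q = (\<Sum>l\<in>L. kappa (g l) q)" unfolding f kappa_app
      by (rule lin1) (rule fg)
    also have "\<dots> = 0" by (rule sum.neutral) (use kg in blast)
    finally show "kappa f q = 0" .
  qed
qed

lemma kappa_dJ:
  assumes "f \<in> Jsp n r k" and k0: "k \<ge> 0" and r1: "r \<ge> 1"
  shows "kappa (dext n f) \<in> Jsp n r k"
proof -
  obtain L g where L: "finite L" "\<forall>l\<in>L. 1 \<le> l \<and> g l \<in> kappa ` Hlsp n (r + int l - 1) l (k + 1)"
    and f: "f = (\<lambda>q. \<Sum>l\<in>L. g l q)" using assms(1) unfolding Jsp_def by blast
  have "\<forall>l\<in>L. \<exists>h. g l = kappa h \<and> h \<in> Hlsp n (r + int l - 1) l (k + 1)" using L(2) by blast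
  then obtain h where h: "\<forall>l\<in>L. g l = kappa (h l) \<and> h l \<in> Hlsp n (r + int l - 1) l (k + 1)"
    using bchoice[OF \<open>\<forall>l\<in>L. \<exists>h. _\<close>] by blast
  define c where "c l = nat (r + int l - 1 + (k + 1))" for l
  define h' where "h' l = (\<lambda>q. real (c l) * h l q)" for l
  have fg: "fs (g l)" if "l \<in> L" for l
    using h that fs_app[OF fs_km] unfolding kappa_app by simp
  have fdg: "fs (dext n (g l))" for l unfolding dext_app by (rule fs_app, rule fs_dm)
  have df: "dext n f = (\<lambda>q. \<Sum>l\<in>L. dext n (g l) q)"
  proof
    fix q show "dext n f q = (\<Sum>l\<in>L. dext n (g l) q)" unfolding f dext_app
      by (rule lin1) (rule fg)
  qed
  have kdg: "kappa (dext n (g l)) = kappa (h' l)" if l: "l \<in> L" for l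
  proof -
    have hl: "h l \<in> Hlsp n (r + int l - 1) l (k + 1)" and gl: "g l = kappa (h l)" using h l by auto
    have form: "is_form n (h l)" using hl by (simp add: Hlsp_def spanM_def)
    have hom: "mdeg n (fst m) + card (snd m) = c l" if "h l m \<noteq> 0" for m
    proof -
      have "m \<in> {m. valid n m \<and> int (mdeg n (fst m)) = r + int l - 1 \<and> int (card (snd m)) = k + 1 \<and> ldeg n m \<ge> l}"
        using hl that unfolding Hlsp_def spanM_def by blast
      then have "int (mdeg n (fst m)) = r + int l - 1" "int (card (snd m)) = k + 1" by auto
      then have "int (mdeg n (fst m) + card (snd m)) = r + int l - 1 + (k + 1)" by simp
      then show ?thesis unfolding c_def by (metis nat_int)
    qed
    have "kappa (dext n (g l)) = (\<lambda>q. real (c l) * kappa (h l) q)" unfolding gl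
      by (rule kdk[OF form hom])
    also have "\<dots> = kappa (h' l)"
    proof
      fix q show "real (c l) * kappa (h l) q = kappa (h' l) q"
        unfolding h'_def kappa_app by (rule app_scale[symmetric], rule fs_form[OF form])
    qed
    finally show ?thesis .
  qed
  have "kappa (dext n f) = (\<lambda>q. \<Sum>l\<in>L. kappa (h' l) q)"
  proof
    fix q
    have "kappa (dext n f) q = (\<Sum>l\<in>L. kappa (dext n (g l)) q)" unfolding df kappa_app
      by (rule lin1) (rule fdg)
    also have "\<dots> = (\<Sum>l\<in>L. kappa (h' l) q)" by (rule sum.cong) (auto simp: kdg)
    finally show "kappa (dext n f) q = (\<Sum>l\<in>L. kappa (h' l) q)" .
  qed
  moreover have "\<forall>l\<in>L. 1 \<le> l \<and> kappa (h' l) \<in> kappa ` Hlsp n (r + int l - 1) l (k + 1)"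
  proof
    fix l assume l: "l \<in> L"
    have "h' l \<in> Hlsp n (r + int l - 1) l (k + 1)"
      using h l unfolding h'_def Hlsp_def by (auto intro: spanM_scale)
    then show "1 \<le> l \<and> kappa (h' l) \<in> kappa ` Hlsp n (r + int l - 1) l (k + 1)" using L(2) l by blast
  qed
  ultimately show ?thesis unfolding Jsp_def using L(1)
    by (intro CollectI exI[of _ L] exI[of _ "\<lambda>l. kappa (h' l)"]) simp
qed



theorem mainTheorem13:
  fixes n :: nat and r k :: int
  assumes "n \<ge> 1" and "r \<ge> 1" and "1 \<le> k" and "k \<le> int n"
  shows "kappa ` Ssp n (r - 1) k \<subseteq> Ssp n r (k - 1)"
proof
  fix y assume "y \<in> kappa ` Ssp n (r - 1) k"
  then obtain x where y: "y = kappa x" and x: "x \<in> Ssp n (r - 1) k" by blast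
  obtain p j e where x_eq: "x = (\<lambda>q. p q + j q + e q)" and p: "p \<in> Psp n (r - 1) k"
    and j: "j \<in> Jsp n (r - 1) k" and e: "e \<in> dext n ` Jsp n (r - 1 + 1) (k - 1)"
    using x unfolding Ssp_def by blast
  obtain j' where e_eq: "e = dext n j'" and j': "j' \<in> Jsp n r (k - 1)" using e by auto
  have fp: "fs p" using p unfolding Psp_def spanM_def by (blast intro: fs_form)
  have fj: "fs j" using j by (rule fs_J)
  have fe: "fs e" unfolding e_eq dext_app by (rule fs_app, rule fs_dm)
  have ky: "y = (\<lambda>q. kappa p q + kappa e q + 0)"
  proof
    fix q
    have "kappa x q = kappa (\<lambda>q. p q + j q) q + kappa e q"
      unfolding x_eq kappa_app by (rule app_add[OF fs_add[OF fp fj] fe])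
    also have "\<dots> = kappa p q + kappa j q + kappa e q"
      unfolding kappa_app by (simp add: app_add[OF fp fj])
    also have "kappa j q = 0" using kappa_J[OF j] by simp
    finally show "y q = kappa p q + kappa e q + 0" using y by simp
  qed
  have P: "kappa p \<in> Psp n r (k - 1)" by (rule kappa_P[OF p])
  have J: "kappa e \<in> Jsp n r (k - 1)" unfolding e_eq
    by (rule kappa_dJ[OF j']) (use assms in auto)
  have Z0: "(\<lambda>q. 0) \<in> Jsp n (r + 1) (k - 1 - 1)"
    unfolding Jsp_def by (intro CollectI exI[of _ "{}"]) auto
  have Z: "(\<lambda>q. 0) \<in> dext n ` Jsp n (r + 1) (k - 1 - 1)"
  proof -
    have "dext n (\<lambda>q. 0) = (\<lambda>q. 0)" unfolding dext_app by (rule app_zero)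
    then show ?thesis using Z0 by (metis image_eqI)
  qed
  show "y \<in> Ssp n r (k - 1)" unfolding Ssp_def ky
    by (intro CollectI exI[of _ "kappa p"] exI[of _ "kappa e"] exI[of _ "\<lambda>q. 0"]) (use P J Z in simp)
qed

end
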